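(* Let $Q\in\mathbb{Z}[x_1,\dots,x_n]$ be an integral form with $\alpha_Q>2$. Then $q^{1-n}|V_\lambda(q)|\lesssim1$ uniformly in integers $q\ge1$ and $\lambda\in\mathbb{Z}$.
   Context: $e(t)=e^{2\pi it}$, $Z_q=\mathbb{Z}/q\mathbb{Z}$, $U_q=Z_q^*$ ($U_1=Z_1=\{0\}$). $V_\lambda(q)=\{s\in Z_q^n: Q(s)\equiv\lambda\ (\mathrm{mod}\ q)\}$. $F_q(a,\mathbf{a})=q^{-n}\sum_{s\in Z_q^n}e(Q(s)a/q+s\cdot\mathbf{a}/q)$ and $\alpha_Q=\sup\{\beta\ge0:\ \sup_{q\ge1}\sup_{a\in U_q,\ \mathbf{a}\in Z_q^n}q^\beta|F_q(a,\mathbf{a})|<\infty\}$. *)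

theory Defs
  imports "HOL-Analysis.Analysis" "HOL-Library.Extended_Real"
begin

text \<open>Points of Z^n are modelled as functions nat => int, only the coordinates
  i < n being relevant.  A monomial is an exponent vector nat => nat.\<close>

text \<open>Q is identified with its evaluation map.\<close>
definition integral_form :: "nat \<Rightarrow> ((nat \<Rightarrow> int) \<Rightarrow> int) \<Rightarrow> bool" where
  "integral_form n Q \<longleftrightarrow>
     (\<exists>(d::nat) (M::(nat \<Rightarrow> nat) set) (c::(nat \<Rightarrow> nat) \<Rightarrow> int).
        finite M \<and>
        (\<forall>m\<in>M. (\<Sum>i<n. m i) = d \<and> (\<forall>i\<ge>n. m i = 0)) \<and>
        (\<forall>x. Q x = (\<Sum>m\<in>M. c m * (\<Prod>i<n. x i ^ m i))))"

definition e :: "real \<Rightarrow> complex" where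
  "e t = exp (2 * of_real pi * \<i> * of_real t)"

text \<open>Z_q^n, represented by the canonical residues 0..q-1 in each coordinate.\<close>
definition Zqn :: "nat \<Rightarrow> nat \<Rightarrow> (nat \<Rightarrow> int) set" where
  "Zqn n q = {s. (\<forall>i<n. 0 \<le> s i \<and> s i < int q) \<and> (\<forall>i\<ge>n. s i = 0)}"

text \<open>U_q = (Z/qZ)^*, as canonical residues; U_1 = {0}.\<close>
definition Uq :: "nat \<Rightarrow> int set" where
  "Uq q = {a. 0 \<le> a \<and> a < int q \<and> coprime a (int q)}"

definition V :: "nat \<Rightarrow> ((nat \<Rightarrow> int) \<Rightarrow> int) \<Rightarrow> int \<Rightarrow> nat \<Rightarrow> (nat \<Rightarrow> int) set" where
  "V n Q lam q = {s \<in> Zqn n q. Q s mod int q = lam mod int q}"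

definition F :: "nat \<Rightarrow> ((nat \<Rightarrow> int) \<Rightarrow> int) \<Rightarrow> nat \<Rightarrow> int \<Rightarrow> (nat \<Rightarrow> int) \<Rightarrow> complex" where
  "F n Q q a av = (1 / of_nat q ^ n) *
     (\<Sum>s\<in>Zqn n q. e (real_of_int (Q s * a) / real q
                        + real_of_int (\<Sum>i<n. s i * av i) / real q))"

definition alpha :: "nat \<Rightarrow> ((nat \<Rightarrow> int) \<Rightarrow> int) \<Rightarrow> ereal" where
  "alpha n Q = Sup (ereal ` {\<beta>::real. \<beta> \<ge> 0 \<and>
      (\<exists>C. \<forall>q\<ge>1. \<forall>a\<in>Uq q. \<forall>av\<in>Zqn n q. real q powr \<beta> * cmod (F n Q q a av) \<le> C)})"

end

theory Submission
  imports Defs "HOL-Library.FuncSet"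
begin


lemma e_add: "e (x + y) = e x * e y"
  by (simp add: e_def exp_add[symmetric] algebra_simps)

lemma e_int: "e (of_int k) = 1"
proof -
  have "e (of_int k) = exp ((2 * of_int k * pi) * \<i>)" by (simp add: e_def mult_ac)
  also have "\<dots> = 1" by (rule exp_integer_2pi) simp
  finally show ?thesis .
qed

lemma norm_e [simp]: "cmod (e t) = 1"
  by (simp add: e_def norm_exp_eq_Re)

lemma e_pow: "e t ^ a = e (real a * t)"
  by (simp add: e_def exp_of_nat_mult[symmetric] mult_ac)

lemma e_eq_1: "e t = 1 \<longleftrightarrow> t \<in> \<int>"
proof
  assume "e t = 1"
  then obtain n :: int where "2 * pi * t = of_int (2*n) * pi"
    by (auto simp: e_def exp_eq_1)
  then have "t = of_int n" by simp
  then show "t \<in> \<int>" by simp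
next
  assume "t \<in> \<int>" then obtain k where "t = of_int k" by (auto elim: Ints_cases)
  then show "e t = 1" by (simp add: e_int)
qed

lemma e_cong:
  assumes "d > 0" "k mod int d = k' mod int d"
  shows "e (real_of_int k / real d) = e (real_of_int k' / real d)"
proof -
  obtain j where j: "k = k' + int d * j"
    using assms(2) by (metis mod_eq_dvd_iff dvd_def diff_eq_eq add.commute)
  have "real_of_int k / real d = real_of_int k' / real d + of_int j"
    using assms(1) by (simp add: j field_simps)
  then show ?thesis by (simp add: e_add e_int)
qed

lemma orth:
  assumes "q > 0"
  shows "(\<Sum>a<q. e (real_of_int (k * int a) / real q)) = (if int q dvd k then of_nat q else 0)"
proof -
  have eq: "(\<Sum>a<q. e (real_of_int (k * int a) / real q)) = (\<Sum>a<q. e (real_of_int k / real q) ^ a)"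
    by (simp add: e_pow field_simps)
  show ?thesis
  proof (cases "int q dvd k")
    case True
    then obtain j where j: "k = int q * j" by auto
    have "e (real_of_int (k * int a) / real q) = 1" for a
      using assms by (simp add: j e_int[of "j * int a", simplified] field_simps)
    then show ?thesis using True by simp
  next
    case False
    have ne: "e (real_of_int k / real q) \<noteq> 1"
    proof
      assume "e (real_of_int k / real q) = 1"
      then obtain j where "real_of_int k / real q = of_int j" by (auto simp: e_eq_1 elim: Ints_cases)
      then have "k = int q * j" using assms by (simp add: field_simps) (metis of_int_eq_iff of_int_mult of_int_of_nat_eq)
      with False show False by auto
    qed
    have "e (real_of_int k / real q) ^ q = 1"
      using assms by (simp add: e_pow e_int)
    then show ?thesis using False ne unfolding eq by (simp add: geometric_sum)
  qed
qed



lemma Zqn_bij: "bij_betw (\<lambda>s. restrict s {..<n}) (Zqn n m) (PiE {..<n} (\<lambda>_. {0..<int m}))"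
proof (rule bij_betw_byWitness[where f'="\<lambda>f i. if i < n then f i else 0"])
  show "\<forall>a\<in>Zqn n m. (\<lambda>i. if i < n then restrict a {..<n} i else 0) = a"
    by (auto simp: Zqn_def fun_eq_iff)
  show "\<forall>a'\<in>PiE {..<n} (\<lambda>_. {0..<int m}). restrict (\<lambda>i. if i < n then a' i else 0) {..<n} = a'"
    by (auto simp: PiE_def extensional_def fun_eq_iff)
  show "(\<lambda>s. restrict s {..<n}) ` Zqn n m \<subseteq> PiE {..<n} (\<lambda>_. {0..<int m})"
    by (auto simp: Zqn_def PiE_def extensional_def)
  show "(\<lambda>f i. if i < n then f i else 0) ` PiE {..<n} (\<lambda>_. {0..<int m}) \<subseteq> Zqn n m"
    by (auto simp: Zqn_def PiE_def Pi_def)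
qed
lemma card_Zqn: "card (Zqn n m) = m ^ n"
  using bij_betw_same_card[OF Zqn_bij[of n m]] by (simp add: card_PiE)

lemma finite_Zqn: "finite (Zqn n m)"
proof -
  have "finite (PiE {..<n} (\<lambda>_. {0..<int m}))" by (intro finite_PiE) auto
  then show ?thesis using bij_betw_finite[OF Zqn_bij[of n m]] by simp
qed


lemma form_period:
  assumes "integral_form n Q" "\<forall>i<n. x i mod k = y i mod k"
  shows "Q x mod k = Q y mod k"
proof -
  obtain d M c where Q: "\<forall>x. Q x = (\<Sum>m\<in>M. c m * (\<Prod>i<n. x i ^ m i))"
    using assms(1) unfolding integral_form_def by blast
  have pw: "x i ^ j mod k = y i ^ j mod k" if "i < n" for i j
  proof -
    have "x i ^ j mod k = (x i mod k) ^ j mod k" by (simp add: power_mod)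
    also have "\<dots> = (y i mod k) ^ j mod k" using assms(2) that by simp
    also have "\<dots> = y i ^ j mod k" by (simp add: power_mod)
    finally show ?thesis .
  qed
  have pr: "(\<Prod>i<n. x i ^ m i) mod k = (\<Prod>i<n. y i ^ m i) mod k" for m
  proof -
    have "(\<Prod>i<n. x i ^ m i) mod k = (\<Prod>i<n. (x i ^ m i) mod k) mod k" by (simp only: mod_prod_eq)
    also have "(\<Prod>i<n. (x i ^ m i) mod k) = (\<Prod>i<n. (y i ^ m i) mod k)"
      using pw by (intro prod.cong) auto
    also have "(\<Prod>i<n. (y i ^ m i) mod k) mod k = (\<Prod>i<n. y i ^ m i) mod k" by (simp only: mod_prod_eq)
    finally show ?thesis .
  qed
  have tm: "c m * (\<Prod>i<n. x i ^ m i) mod k = c m * (\<Prod>i<n. y i ^ m i) mod k" for m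
    by (metis pr mod_mult_right_eq)
  have "(\<Sum>m\<in>M. c m * (\<Prod>i<n. x i ^ m i)) mod k = (\<Sum>m\<in>M. c m * (\<Prod>i<n. x i ^ m i) mod k) mod k"
    by (simp only: mod_sum_eq)
  also have "\<dots> = (\<Sum>m\<in>M. c m * (\<Prod>i<n. y i ^ m i) mod k) mod k"
    using tm by simp
  also have "\<dots> = (\<Sum>m\<in>M. c m * (\<Prod>i<n. y i ^ m i)) mod k"
    by (simp only: mod_sum_eq)
  finally show ?thesis using Q by simp
qed

lemma Zqn_split_bij:
  assumes "d > 0"
  shows "bij_betw (\<lambda>(t,u). \<lambda>i. t i + int d * u i) (Zqn n d \<times> Zqn n g) (Zqn n (g*d))"
proof (rule bij_betw_byWitness[where f'="\<lambda>s. (\<lambda>i. s i mod int d, \<lambda>i. s i div int d)"])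
  show "\<forall>a\<in>Zqn n d \<times> Zqn n g. (\<lambda>s. (\<lambda>i. s i mod int d, \<lambda>i. s i div int d)) ((\<lambda>(t, u) i. t i + int d * u i) a) = a"
  proof -
    have h: "(t i + int d * u i) mod int d = t i \<and> (t i + int d * u i) div int d = u i"
      if t: "t \<in> Zqn n d" for t u :: "nat \<Rightarrow> int" and i
    proof -
      have a: "0 \<le> t i" "t i < int d" using t assms by (cases "i < n"; auto simp: Zqn_def)+
      have "(t i + int d * u i) mod int d = t i mod int d" by simp
      also have "\<dots> = t i" using a by simp
      finally show ?thesis using a assms by simp
    qed
    have h2: "t i mod int d = t i" "t i div int d = 0" if t: "t \<in> Zqn n d" for t :: "nat \<Rightarrow> int" and i
      using h[OF t, where u="\<lambda>_. 0" and i=i] by simp_all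
    show ?thesis by (clarsimp simp: fun_eq_iff h2) (meson h)
  qed
  show "\<forall>a'\<in>Zqn n (g * d). (\<lambda>(t, u) i. t i + int d * u i) ((\<lambda>s. (\<lambda>i. s i mod int d, \<lambda>i. s i div int d)) a') = a'"
    by (simp add: fun_eq_iff mod_mult_div_eq)
  show "(\<lambda>(t, u) i. t i + int d * u i) ` (Zqn n d \<times> Zqn n g) \<subseteq> Zqn n (g * d)"
  proof clarsimp
    fix t u assume t: "t \<in> Zqn n d" and u: "u \<in> Zqn n g"
    show "(\<lambda>i. t i + int d * u i) \<in> Zqn n (g * d)"
      unfolding Zqn_def
    proof (intro CollectI conjI allI impI)
      fix i assume "i < n"
      then have a: "0 \<le> t i" "t i < int d" "0 \<le> u i" "u i < int g" using t u by (auto simp: Zqn_def)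
      then show "0 \<le> t i + int d * u i" by simp
      have "u i + 1 \<le> int g" using a by simp
      then have "int d * (u i + 1) \<le> int d * int g" by (intro mult_left_mono) auto
      then show "t i + int d * u i < int (g * d)" using a by (simp add: algebra_simps)
    next
      fix i assume "n \<le> i" then show "t i + int d * u i = 0" using t u by (auto simp: Zqn_def)
    qed
  qed
  show "(\<lambda>s. (\<lambda>i. s i mod int d, \<lambda>i. s i div int d)) ` Zqn n (g * d) \<subseteq> Zqn n d \<times> Zqn n g"
  proof clarsimp
    fix s assume s: "s \<in> Zqn n (g*d)"
    show "(\<lambda>i. s i mod int d) \<in> Zqn n d \<and> (\<lambda>i. s i div int d) \<in> Zqn n g"
      unfolding Zqn_def
    proof (intro conjI CollectI allI impI)
      fix i assume "i < n"
      then have a: "0 \<le> s i" "s i < int g * int d" using s by (auto simp: Zqn_def)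
      show "0 \<le> s i mod int d" "s i mod int d < int d" using assms by auto
      show "0 \<le> s i div int d" using a assms by (simp add: pos_imp_zdiv_nonneg_iff)
      show "s i div int d < int g"
      proof (rule ccontr)
        assume "\<not> s i div int d < int g"
        then have "int d * int g \<le> int d * (s i div int d)" by (intro mult_left_mono) auto
        moreover have "int d * (s i div int d) + s i mod int d = s i" by (rule mult_div_mod_eq)
        moreover have "0 \<le> s i mod int d" using assms by simp
        moreover have "s i < int d * int g" using a by (simp add: mult.commute)
        ultimately show False by linarith
      qed
    qed (use s in \<open>auto simp: Zqn_def\<close>)
  qed
qed




lemma sum_reduce:
  fixes h :: "(nat \<Rightarrow> int) \<Rightarrow> complex"
  assumes "d > 0" "\<And>t u. t \<in> Zqn n d \<Longrightarrow> u \<in> Zqn n g \<Longrightarrow> h (\<lambda>i. t i + int d * u i) = h t"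
  shows "(\<Sum>s\<in>Zqn n (g*d). h s) = of_nat (g ^ n) * (\<Sum>t\<in>Zqn n d. h t)"
proof -
  have "(\<Sum>s\<in>Zqn n (g*d). h s) = (\<Sum>p\<in>Zqn n d \<times> Zqn n g. h ((\<lambda>(t,u). \<lambda>i. t i + int d * u i) p))"
    by (rule sum.reindex_bij_betw[OF Zqn_split_bij[OF assms(1)], symmetric])
  also have "\<dots> = (\<Sum>t\<in>Zqn n d. \<Sum>u\<in>Zqn n g. h (\<lambda>i. t i + int d * u i))"
    by (simp add: sum.cartesian_product split_def)
  also have "\<dots> = (\<Sum>t\<in>Zqn n d. \<Sum>u\<in>Zqn n g. h t)"
    using assms(2) by (intro sum.cong refl) auto
  also have "\<dots> = (\<Sum>t\<in>Zqn n d. of_nat (g ^ n) * h t)"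
    by (simp add: card_Zqn)
  finally show ?thesis by (simp add: sum_distrib_left)
qed

lemma S_eq:
  assumes Q: "integral_form n Q" and q: "q > 0" and a: "a < q"
  defines "g \<equiv> gcd a q"
  defines "d \<equiv> q div g"
  defines "a' \<equiv> a div g"
  shows "(\<Sum>s\<in>Zqn n q. e (real_of_int (Q s * int a) / real q)) = of_nat q ^ n * F n Q d (int a') (\<lambda>_. 0)"
proof -
  have g0: "g > 0" using q by (simp add: g_def)
  have qgd: "q = g * d" by (simp add: d_def g_def)
  have aga: "a = g * a'" by (simp add: a'_def g_def)
  have d0: "d > 0" using q qgd by (metis gr0I mult_0_right)
  define h where "h = (\<lambda>s. e (real_of_int (Q s * int a') / real d))"
  have "real_of_int (Q s * int a) / real q = real_of_int (Q s * int a') / real d" for s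
    using g0 d0 by (simp add: qgd aga field_simps)
  then have "(\<Sum>s\<in>Zqn n q. e (real_of_int (Q s * int a) / real q)) = (\<Sum>s\<in>Zqn n (g*d). h s)"
    by (simp add: h_def qgd[symmetric])
  also have "\<dots> = of_nat (g ^ n) * (\<Sum>t\<in>Zqn n d. h t)"
  proof (rule sum_reduce[OF d0])
    fix t u
    have "Q (\<lambda>i. t i + int d * u i) mod int d = Q t mod int d"
      by (rule form_period[OF Q]) simp
    then have "(Q (\<lambda>i. t i + int d * u i) * int a') mod int d = (Q t * int a') mod int d"
      by (metis mod_mult_left_eq)
    then show "h (\<lambda>i. t i + int d * u i) = h t"
      unfolding h_def by (rule e_cong[OF d0])
  qed
  also have "(\<Sum>t\<in>Zqn n d. h t) = of_nat d ^ n * F n Q d (int a') (\<lambda>_. 0)"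
    using d0 by (simp add: F_def h_def)
  finally show ?thesis by (simp add: qgd power_mult_distrib)
qed

lemma count:
  assumes q: "q > 0"
  shows "of_nat q * of_nat (card (V n Q lam q)) =
    (\<Sum>a<q. \<Sum>s\<in>Zqn n q. e (real_of_int ((Q s - lam) * int a) / real q))"
proof -
  have "(\<Sum>a<q. \<Sum>s\<in>Zqn n q. e (real_of_int ((Q s - lam) * int a) / real q))
      = (\<Sum>s\<in>Zqn n q. \<Sum>a<q. e (real_of_int ((Q s - lam) * int a) / real q))"
    by (rule sum.swap)
  also have "\<dots> = (\<Sum>s\<in>Zqn n q. if int q dvd (Q s - lam) then of_nat q else 0)"
    using q by (intro sum.cong refl orth)
  also have "\<dots> = (\<Sum>s\<in>{s\<in>Zqn n q. int q dvd (Q s - lam)}. of_nat q)"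
    by (rule sum.inter_filter[symmetric]) (simp add: finite_Zqn)
  also have "{s\<in>Zqn n q. int q dvd (Q s - lam)} = V n Q lam q"
    by (simp add: V_def mod_eq_dvd_iff)
  finally show ?thesis by (simp add: mult.commute)
qed



lemma card_mult_le:
  assumes q: "q > 0" and k: "k > 0"
  shows "card {a\<in>{..<q}. q dvd k * a} \<le> k"
proof -
  have "card {a\<in>{..<q}. q dvd k * a} \<le> card {..<k}"
  proof (rule card_inj_on_le[where f="\<lambda>a. k * a div q"])
    show "inj_on (\<lambda>a. k * a div q) {a \<in> {..<q}. q dvd k * a}"
    proof (rule inj_onI)
      fix x y assume x: "x \<in> {a \<in> {..<q}. q dvd k * a}" and y: "y \<in> {a \<in> {..<q}. q dvd k * a}"
        and eq: "k * x div q = k * y div q"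
      have "k * x = k * y"
        using x y eq by (metis (no_types, lifting) dvd_div_mult_self mem_Collect_eq)
      then show "x = y" using k by simp
    qed
    show "(\<lambda>a. k * a div q) ` {a \<in> {..<q}. q dvd k * a} \<subseteq> {..<k}"
    proof clarsimp
      fix a assume "a < q"
      then have "k * a < k * q" using k by simp
      then show "k * a div q < k" using q by (simp add: div_less_iff_less_mult mult.commute)
    qed
  qed simp
  then show ?thesis by simp
qed

lemma divsum:
  assumes q: "q > 0" and b: "\<beta> > 2"
  shows "(\<Sum>a<q. real (q div gcd a q) powr (-\<beta>)) \<le> (\<Sum>k\<in>{1..q}. real k powr (1-\<beta>))"
proof -
  define f where "f a k = (if q dvd k * a then real k powr (-\<beta>) else 0)" for a k
  have trm: "real (q div gcd a q) powr (-\<beta>) \<le> (\<Sum>k\<in>{1..q}. f a k)" if "a < q" for a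
  proof -
    define g where "g = gcd a q"
    define d where "d = q div g"
    have g0: "g > 0" using q by (simp add: g_def)
    have qgd: "q = g * d" by (simp add: d_def g_def)
    have aga: "a = g * (a div g)" by (simp add: g_def)
    have d0: "d > 0" using q qgd by (metis gr0I mult_0_right)
    have dq: "d \<le> q" using qgd g0 by simp
    have dv: "q dvd d * a" using qgd aga by (metis dvd_triv_left mult.assoc mult.commute)
    have "f a d \<le> (\<Sum>k\<in>{1..q}. f a k)"
      by (rule member_le_sum) (use d0 dq in \<open>auto simp: f_def\<close>)
    then show ?thesis using dv by (simp add: f_def d_def g_def)
  qed
  have "(\<Sum>a<q. real (q div gcd a q) powr (-\<beta>)) \<le> (\<Sum>a<q. \<Sum>k\<in>{1..q}. f a k)"
    using trm by (intro sum_mono) auto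
  also have "\<dots> = (\<Sum>k\<in>{1..q}. \<Sum>a<q. f a k)" by (rule sum.swap)
  also have "\<dots> \<le> (\<Sum>k\<in>{1..q}. real k powr (1-\<beta>))"
  proof (rule sum_mono)
    fix k assume k: "k \<in> {1..q}"
    have "(\<Sum>a<q. f a k) = (\<Sum>a\<in>{a\<in>{..<q}. q dvd k * a}. real k powr (-\<beta>))"
      unfolding f_def by (rule sum.inter_filter[symmetric]) simp
    also have "\<dots> = real (card {a\<in>{..<q}. q dvd k * a}) * real k powr (-\<beta>)" by simp
    also have "\<dots> \<le> real k * real k powr (-\<beta>)"
      using card_mult_le[OF q, of k] k by (intro mult_right_mono) auto
    also have "\<dots> = real k powr (1-\<beta>)"
      using k by (simp add: powr_diff powr_minus divide_inverse)
    finally show "(\<Sum>a<q. f a k) \<le> real k powr (1-\<beta>)" .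
  qed
  finally show ?thesis .
qed

lemma divsum2:
  assumes b: "\<beta> > 2"
  shows "(\<Sum>k\<in>{1..q}. real k powr (1-\<beta>)) \<le> (\<Sum>k. real k powr (1-\<beta>))"
proof (rule sum_le_suminf)
  show "summable (\<lambda>k. real k powr (1-\<beta>))" using b by (simp add: summable_real_powr_iff)
qed auto



theorem corollary3p3:
  fixes n :: nat and Q :: "(nat \<Rightarrow> int) \<Rightarrow> int"
  assumes "integral_form n Q"
    and "alpha n Q > 2"
  shows "\<exists>C. \<forall>q::nat. \<forall>lam::int. q \<ge> 1 \<longrightarrow>
           real q powr (1 - real n) * real (card (V n Q lam q)) \<le> C"
proof -
  have "(2::ereal) < Sup (ereal ` {\<beta>::real. \<beta> \<ge> 0 \<and>
      (\<exists>C. \<forall>q\<ge>1. \<forall>a\<in>Uq q. \<forall>av\<in>Zqn n q. real q powr \<beta> * cmod (F n Q q a av) \<le> C)})"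
    using assms(2) by (simp add: alpha_def)
  then obtain \<beta> C where b: "\<beta> > 2"
    and C: "\<forall>q\<ge>1. \<forall>a\<in>Uq q. \<forall>av\<in>Zqn n q. real q powr \<beta> * cmod (F n Q q a av) \<le> C"
    unfolding less_Sup_iff by auto
  define K where "K = (\<Sum>k. real k powr (1-\<beta>))"
  define C' where "C' = max C 0"
  have Fb: "cmod (F n Q d (int (a div gcd a q)) (\<lambda>_. 0)) \<le> C' * real d powr (-\<beta>)"
    if q: "q > 0" and a: "a < q" and dd: "d = q div gcd a q" for q a d
  proof -
    define g where "g = gcd a q"
    have g0: "g > 0" using q by (simp add: g_def)
    have qgd: "q = g * d" by (simp add: dd g_def)
    have aga: "a = g * (a div g)" by (simp add: g_def)
    have d0: "d > 0" using q qgd by (metis gr0I mult_0_right)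
    have "a div g < d"
    proof (rule ccontr)
      assume "\<not> a div g < d"
      then have "g * d \<le> g * (a div g)" by simp
      then show False using a qgd aga by linarith
    qed
    moreover have "coprime (a div g) d"
      using div_gcd_coprime[of a q] q by (simp add: dd g_def)
    ultimately have U: "int (a div g) \<in> Uq d" by (simp add: Uq_def)
    have Z: "(\<lambda>_. 0) \<in> Zqn n d" using d0 by (simp add: Zqn_def)
    have "real d powr \<beta> * cmod (F n Q d (int (a div g)) (\<lambda>_. 0)) \<le> C"
      using C d0 U Z by auto
    then have "cmod (F n Q d (int (a div g)) (\<lambda>_. 0)) \<le> C' * real d powr (-\<beta>)"
      using d0 by (simp add: powr_minus field_simps C'_def)
    then show ?thesis by (simp add: g_def)
  qed
  have "real q powr (1 - real n) * real (card (V n Q lam q)) \<le> C' * K" if q1: "q \<ge> 1" for q lam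
  proof -
    have q: "q > 0" using q1 by simp
    let ?d = "\<lambda>a. q div gcd a q"
    have "real q * real (card (V n Q lam q)) = cmod (of_nat q * of_nat (card (V n Q lam q)))"
      by (simp only: norm_mult norm_of_nat)
    also have "\<dots> = cmod (\<Sum>a<q. \<Sum>s\<in>Zqn n q. e (real_of_int ((Q s - lam) * int a) / real q))"
      using count[OF q] by simp
    also have "\<dots> \<le> (\<Sum>a<q. cmod (\<Sum>s\<in>Zqn n q. e (real_of_int ((Q s - lam) * int a) / real q)))"
      by (rule norm_sum)
    also have "\<dots> \<le> (\<Sum>a<q. real q ^ n * (C' * real (?d a) powr (-\<beta>)))"
    proof (rule sum_mono)
      fix a assume "a \<in> {..<q}"
      then have a: "a < q" by simp
      have "(\<Sum>s\<in>Zqn n q. e (real_of_int ((Q s - lam) * int a) / real q))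
          = e (- real_of_int (lam * int a) / real q) * (\<Sum>s\<in>Zqn n q. e (real_of_int (Q s * int a) / real q))"
        by (simp add: sum_distrib_left e_add[symmetric] algebra_simps diff_divide_distrib)
      then have "cmod (\<Sum>s\<in>Zqn n q. e (real_of_int ((Q s - lam) * int a) / real q))
          = cmod (\<Sum>s\<in>Zqn n q. e (real_of_int (Q s * int a) / real q))"
        by (simp add: norm_mult)
      also have "\<dots> = real q ^ n * cmod (F n Q (?d a) (int (a div gcd a q)) (\<lambda>_. 0))"
        using S_eq[OF assms(1) q a] by (simp add: norm_mult norm_power)
      also have "\<dots> \<le> real q ^ n * (C' * real (?d a) powr (-\<beta>))"
        using Fb[OF q a refl] by (intro mult_left_mono) auto
      finally show "cmod (\<Sum>s\<in>Zqn n q. e (real_of_int ((Q s - lam) * int a) / real q))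
          \<le> real q ^ n * (C' * real (?d a) powr (-\<beta>))" .
    qed
    also have "\<dots> = real q ^ n * C' * (\<Sum>a<q. real (?d a) powr (-\<beta>))"
      by (simp add: sum_distrib_left mult.assoc)
    also have "\<dots> \<le> real q ^ n * C' * K"
    proof (rule mult_left_mono)
      show "(\<Sum>a<q. real (?d a) powr (-\<beta>)) \<le> K"
        unfolding K_def using divsum[OF q b] divsum2[OF b, of q] by linarith
      show "0 \<le> real q ^ n * C'" by (simp add: C'_def)
    qed
    finally have *: "real q * real (card (V n Q lam q)) \<le> real q ^ n * (C' * K)" by (simp add: mult.assoc)
    have "real q powr (1 - real n) = real q / real q ^ n"
      using q by (simp add: powr_diff powr_realpow)
    then have "real q powr (1 - real n) * real (card (V n Q lam q)) = real q * real (card (V n Q lam q)) / real q ^ n"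
      by simp
    also have "\<dots> \<le> C' * K" using * q by (simp add: divide_le_eq mult.commute)
    finally show ?thesis .
  qed
  then show ?thesis by blast
qed


end
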